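(* Let $\varepsilon,\delta>0$ and $s\ge1$ an integer. For $i\in[1:s]$ let $\rho^{(i)}\in\mathcal{D}(\mathcal{H})$ be a quantum state and $\Pi^{(i)}$ a projection operator on $\mathcal{H}$ such that $\mathrm{Tr}[\Pi^{(i)}\rho^{(i)}]\ge1-\varepsilon$. Then there exists a projection operator $\Pi^\star$ such that for all $i\in[1:s]$, $$\mathrm{Tr}[\Pi^\star\rho^{(i)}]\ge 1-\varepsilon-\delta\log(2s),$$ and $$\Pi^\star\preceq\left(\frac{2}{\delta^2}\right)^{\log(2s)}\left(\Pi^{(1)}+\Pi^{(2)}+\dots+\Pi^{(s)}\right).$$
   Context: $\mathcal{H}$ is a finite-dimensional Hilbert space, $\mathcal{D}(\mathcal{H})$ its set of density operators; $\log$ is base 2; $[1:s]=\{1,\dots,s\}$; $P\preceq Q$ means $Q-P$ is positive semi-definite. *)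

theory Defs
  imports Complex_Main "Jordan_Normal_Form.Matrix"
begin

text \<open>Operators on the finite-dimensional Hilbert space H = C^n are complex n x n matrices.\<close>

definition cadjoint :: "complex mat \<Rightarrow> complex mat" where
  "cadjoint A = mat (dim_col A) (dim_row A) (\<lambda>(i,j). cnj (A $$ (j,i)))"

definition ctrace :: "complex mat \<Rightarrow> complex" where
  "ctrace A = (\<Sum>i<dim_row A. A $$ (i,i))"

definition cinner :: "complex vec \<Rightarrow> complex vec \<Rightarrow> complex" where
  "cinner v w = (\<Sum>i<dim_vec w. cnj (v $ i) * w $ i)"

definition psd :: "nat \<Rightarrow> complex mat \<Rightarrow> bool" where
  "psd n A \<longleftrightarrow> A \<in> carrier_mat n n \<and> cadjoint A = A \<and>
     (\<forall>v \<in> carrier_vec n. 0 \<le> Re (cinner v (A *\<^sub>v v)))"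

definition loewner_le :: "nat \<Rightarrow> complex mat \<Rightarrow> complex mat \<Rightarrow> bool" where
  "loewner_le n P Q \<longleftrightarrow> P \<in> carrier_mat n n \<and> Q \<in> carrier_mat n n \<and> psd n (Q - P)"

definition density_op :: "nat \<Rightarrow> complex mat \<Rightarrow> bool" where
  "density_op n \<rho> \<longleftrightarrow> psd n \<rho> \<and> ctrace \<rho> = 1"

definition projection :: "nat \<Rightarrow> complex mat \<Rightarrow> bool" where
  "projection n P \<longleftrightarrow> P \<in> carrier_mat n n \<and> cadjoint P = P \<and> P * P = P"

definition msum :: "nat \<Rightarrow> (nat \<Rightarrow> complex mat) \<Rightarrow> nat set \<Rightarrow> complex mat" where
  "msum n F I = mat n n (\<lambda>(i,j). \<Sum>k\<in>I. F k $$ (i,j))"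

end

theory Submission
  imports Defs "Jordan_Normal_Form.Schur_Decomposition" "Jordan_Normal_Form.Spectral_Radius"
begin


lemma cadj_dims[simp]: "dim_row (cadjoint A) = dim_col A" "dim_col (cadjoint A) = dim_row A"
  by (simp_all add: cadjoint_def)

lemma cadj_index[simp]: "i < dim_col A \<Longrightarrow> j < dim_row A \<Longrightarrow> cadjoint A $$ (i,j) = cnj (A $$ (j,i))"
  by (simp add: cadjoint_def)

lemma cadj_carrier: "A \<in> carrier_mat nr nc \<Longrightarrow> cadjoint A \<in> carrier_mat nc nr"
  by (intro carrier_matI) (auto dest: carrier_matD)

lemma cadj_cadj[simp]: "cadjoint (cadjoint A) = A"
  by (rule eq_matI) auto

lemma cadj_mult: assumes "A \<in> carrier_mat nr n" "B \<in> carrier_mat n nc"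
  shows "cadjoint (A * B) = cadjoint B * cadjoint A"
  using assms by (intro eq_matI) (auto simp: scalar_prod_def cnj_sum mult.commute intro!: sum.cong)

lemma cadj_one[simp]: "cadjoint (1\<^sub>m n) = 1\<^sub>m n"
  by (rule eq_matI) auto

lemma cadj_zero[simp]: "cadjoint (0\<^sub>m n m) = 0\<^sub>m m n"
  by (rule eq_matI) auto

lemma cadj_minus: assumes "A \<in> carrier_mat nr nc" "B \<in> carrier_mat nr nc"
  shows "cadjoint (A - B) = cadjoint A - cadjoint B"
  using assms by (intro eq_matI) auto

lemma cadj_plus: assumes "A \<in> carrier_mat nr nc" "B \<in> carrier_mat nr nc"
  shows "cadjoint (A + B) = cadjoint A + cadjoint B"
  using assms by (intro eq_matI) auto

lemma cadj_smult_real: "cadjoint (complex_of_real r \<cdot>\<^sub>m A) = complex_of_real r \<cdot>\<^sub>m cadjoint A"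
  by (intro eq_matI) auto

lemma cinner_mult: assumes "A \<in> carrier_mat nr nc" "v \<in> carrier_vec nr" "w \<in> carrier_vec nc"
  shows "cinner v (A *\<^sub>v w) = cinner (cadjoint A *\<^sub>v v) w"
proof -
  have "cinner v (A *\<^sub>v w) = (\<Sum>i<nr. \<Sum>j<nc. cnj (v $ i) * (A $$ (i,j) * w $ j))"
    using assms by (simp add: cinner_def scalar_prod_def sum_distrib_left atLeast0LessThan)
  also have "\<dots> = (\<Sum>j<nc. \<Sum>i<nr. cnj (v $ i) * (A $$ (i,j) * w $ j))"
    by (rule sum.swap)
  also have "\<dots> = cinner (cadjoint A *\<^sub>v v) w"
    using assms by (simp add: cinner_def scalar_prod_def sum_distrib_left atLeast0LessThan mult.commute mult.left_commute)
  finally show ?thesis .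
qed

lemma cinner_cnj: "dim_vec v = dim_vec w \<Longrightarrow> cnj (cinner v w) = cinner w v"
  by (simp add: cinner_def mult.commute)

lemma cinner_self_real: "Im (cinner v v) = 0" "Re (cinner v v) \<ge> 0"
  by (simp_all add: cinner_def Re_sum Im_sum sum_nonneg)

lemma cinner_self_eq: "cinner v v = complex_of_real (Re (cinner v v))"
  using cinner_self_real(1)[of v] by (simp add: complex_eq_iff)

lemma cinner_self_zero: "Re (cinner v v) = 0 \<Longrightarrow> v = 0\<^sub>v (dim_vec v)"
proof -
  assume a: "Re (cinner v v) = 0"
  have "Re (cinner v v) = (\<Sum>i<dim_vec v. (Re (v $ i))^2 + (Im (v $ i))^2)"
    by (simp add: cinner_def Re_sum power2_eq_square)
  with a have s0: "(\<Sum>i<dim_vec v. (Re (v $ i))^2 + (Im (v $ i))^2) = 0" by simp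
  have z: "\<forall>i\<in>{..<dim_vec v}. (Re (v $ i))^2 + (Im (v $ i))^2 = 0"
    using sum_nonneg_eq_0_iff[THEN iffD1, OF _ _ s0] by simp
  show ?thesis
  proof (rule eq_vecI)
    fix i assume i: "i < dim_vec (0\<^sub>v (dim_vec v))"
    hence "(Re (v $ i))^2 + (Im (v $ i))^2 = 0" using z by simp
    hence "Re (v $ i) = 0 \<and> Im (v $ i) = 0" by (simp only: sum_power2_eq_zero_iff)
    thus "v $ i = 0\<^sub>v (dim_vec v) $ i" using i by (simp add: complex_eq_iff)
  qed simp
qed

lemma cinner_add_right: assumes "dim_vec w = dim_vec u" shows "cinner v (w + u) = cinner v w + cinner v u"
proof -
  have "cinner v (w + u) = (\<Sum>i<dim_vec u. cnj (v$i) * w$i + cnj (v$i) * u$i)"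
    unfolding cinner_def using assms by (intro sum.cong) (auto simp: distrib_left)
  thus ?thesis using assms by (simp add: sum.distrib cinner_def)
qed
lemma cinner_add_left: assumes "dim_vec v = dim_vec u" "dim_vec w = dim_vec v" shows "cinner (v + u) w = cinner v w + cinner u w"
proof -
  have "cinner (v + u) w = (\<Sum>i<dim_vec w. cnj (v$i) * w$i + cnj (u$i) * w$i)"
    unfolding cinner_def using assms by (intro sum.cong) (auto simp: distrib_right)
  thus ?thesis using assms by (simp add: sum.distrib cinner_def)
qed
lemma cinner_minus_right: assumes "dim_vec w = dim_vec u" shows "cinner v (w - u) = cinner v w - cinner v u"
proof -
  have "cinner v (w - u) = (\<Sum>i<dim_vec u. cnj (v$i) * w$i - cnj (v$i) * u$i)"
    unfolding cinner_def using assms by (intro sum.cong) (auto simp: right_diff_distrib)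
  thus ?thesis using assms by (simp add: sum_subtractf cinner_def)
qed
lemma cinner_minus_left: assumes "dim_vec v = dim_vec u" "dim_vec w = dim_vec v" shows "cinner (v - u) w = cinner v w - cinner u w"
proof -
  have "cinner (v - u) w = (\<Sum>i<dim_vec w. cnj (v$i) * w$i - cnj (u$i) * w$i)"
    unfolding cinner_def using assms by (intro sum.cong) (auto simp: left_diff_distrib)
  thus ?thesis using assms by (simp add: sum_subtractf cinner_def)
qed
lemma cinner_smult_right: "cinner v (c \<cdot>\<^sub>v w) = c * cinner v w"
  unfolding cinner_def by (simp add: sum_distrib_left mult.left_commute)
lemma cinner_smult_left: assumes "dim_vec w = dim_vec v" shows "cinner (c \<cdot>\<^sub>v v) w = cnj c * cinner v w"
proof -
  have "cinner (c \<cdot>\<^sub>v v) w = (\<Sum>i<dim_vec w. cnj c * (cnj (v$i) * w$i))"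
    unfolding cinner_def using assms by (intro sum.cong) auto
  thus ?thesis by (simp add: sum_distrib_left cinner_def)
qed


lemma ctrace_comm: assumes "A \<in> carrier_mat n m" "B \<in> carrier_mat m n"
  shows "ctrace (A * B) = ctrace (B * A)"
proof -
  have "ctrace (A * B) = (\<Sum>i<n. \<Sum>j<m. A $$ (i,j) * B $$ (j,i))"
    using assms by (simp add: ctrace_def scalar_prod_def atLeast0LessThan)
  also have "\<dots> = (\<Sum>j<m. \<Sum>i<n. B $$ (j,i) * A $$ (i,j))"
    by (subst sum.swap) (simp add: mult.commute)
  also have "\<dots> = ctrace (B * A)"
    using assms by (simp add: ctrace_def scalar_prod_def atLeast0LessThan)
  finally show ?thesis .
qed


lemma unit_eigvec:
  assumes A: "A \<in> carrier_mat n n" and n: "n > 0"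
  shows "\<exists>e u. u \<in> carrier_vec n \<and> cinner u u = 1 \<and> A *\<^sub>v u = e \<cdot>\<^sub>v u"
proof -
  from spectrum_non_empty[OF A n] obtain e where "e \<in> spectrum A" by auto
  hence ev: "eigenvalue A e" by (simp add: spectrum_def)
  define v where "v = find_eigenvector A e"
  from find_eigenvector[OF A ev] have "eigenvector A v e" unfolding v_def .
  hence v: "v \<in> carrier_vec n" "v \<noteq> 0\<^sub>v n" "A *\<^sub>v v = e \<cdot>\<^sub>v v" unfolding eigenvector_def using A by auto
  define r where "r = Re (cinner v v)"
  have "r \<ge> 0" unfolding r_def by (rule cinner_self_real)
  moreover have "r \<noteq> 0"
  proof
    assume "r = 0"
    hence "v = 0\<^sub>v (dim_vec v)" using cinner_self_zero[of v] r_def by simp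
    thus False using v by auto
  qed
  ultimately have r0: "r > 0" by auto
  define c where "c = complex_of_real (1 / sqrt r)"
  define u where "u = c \<cdot>\<^sub>v v"
  have u: "u \<in> carrier_vec n" using v unfolding u_def by simp
  have "cinner u u = cnj c * (c * cinner v v)"
    unfolding u_def by (simp add: cinner_smult_left cinner_smult_right)
  also have "cinner v v = complex_of_real r" using cinner_self_eq[of v] r_def by simp
  also have "cnj c * (c * complex_of_real r) = complex_of_real ((1 / sqrt r) * ((1 / sqrt r) * r))"
    unfolding c_def by (simp only: complex_cnj_complex_of_real of_real_mult)
  also have "(1 / sqrt r) * ((1 / sqrt r) * r) = 1"
  proof -
    have "sqrt r * sqrt r = r" using r0 by simp
    thus ?thesis using r0 by (simp add: field_simps)
  qed
  finally have uu: "cinner u u = 1" by simp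
  have "A *\<^sub>v u = e \<cdot>\<^sub>v u"
    unfolding u_def using mult_mat_vec[OF A v(1)] v(3) by (simp add: smult_smult_assoc mult.commute)
  with u uu show ?thesis by blast
qed

lemma scalar_prod_c_cinner: "x \<in> carrier_vec n \<Longrightarrow> y \<in> carrier_vec n \<Longrightarrow> x \<bullet>c y = cinner y x"
  by (simp add: scalar_prod_def cinner_def atLeast0LessThan mult.commute)

definition nz :: "complex vec \<Rightarrow> complex vec" where
  "nz w = complex_of_real (1 / sqrt (Re (cinner w w))) \<cdot>\<^sub>v w"

lemma nz_carrier: "w \<in> carrier_vec n \<Longrightarrow> nz w \<in> carrier_vec n"
  by (simp add: nz_def)

lemma nz_inner: assumes "dim_vec w = dim_vec w'"
  shows "cinner (nz w) (nz w') =
   complex_of_real (1 / sqrt (Re (cinner w w))) * complex_of_real (1 / sqrt (Re (cinner w' w'))) * cinner w w'"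
  unfolding nz_def
  by (subst cinner_smult_left, simp add: assms, subst cinner_smult_right, simp)

lemma nz_one: assumes "cinner w w \<noteq> 0" shows "cinner (nz w) (nz w) = 1"
proof -
  define r where "r = Re (cinner w w)"
  have cw: "cinner w w = complex_of_real r" using cinner_self_eq[of w] r_def by simp
  have "r \<ge> 0" unfolding r_def by (rule cinner_self_real)
  moreover have "r \<noteq> 0" using assms cw by auto
  ultimately have r0: "r > 0" by auto
  have "cinner (nz w) (nz w) = complex_of_real (1 / sqrt r * (1 / sqrt r) * r)"
    unfolding nz_inner[OF refl] r_def[symmetric] cw by (simp only: of_real_mult Re_complex_of_real)
  also have "1 / sqrt r * (1 / sqrt r) * r = 1"
  proof -
    have "sqrt r * sqrt r = r" using r0 by simp
    thus ?thesis using r0 by (simp add: field_simps)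
  qed
  finally show ?thesis by simp
qed

lemma nz_unit: assumes "cinner w w = 1" shows "nz w = w"
  using assms by (simp add: nz_def)

lemma onb_extend:
  assumes u: "u \<in> carrier_vec n" and uu: "cinner u u = 1"
  shows "\<exists>ws. length ws = n \<and> set ws \<subseteq> carrier_vec n \<and> ws ! 0 = u \<and>
     (\<forall>i<n. \<forall>j<n. cinner (ws!i) (ws!j) = (if i = j then 1 else 0))"
proof -
  interpret cof_vec_space n "TYPE(complex)" .
  have u0: "u \<noteq> 0\<^sub>v n"
  proof
    assume "u = 0\<^sub>v n" hence "cinner u u = 0" by (simp add: cinner_def)
    thus False using uu by simp
  qed
  define b where "b = basis_completion u"
  note bc = basis_completion[OF u u0, folded b_def]
  have n0: "n \<noteq> 0"
  proof
    assume "n = 0" hence "u = 0\<^sub>v n" using u by (intro eq_vecI) auto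
    thus False using u0 by simp
  qed
  from bc(6,7) n0 obtain vs where bv: "b = u # vs" by (cases b) auto
  define gs where "gs = gram_schmidt n b"
  note gr = gram_schmidt_result[OF bc(2) bc(4) bc(5) gs_def]
  have gs: "corthogonal gs" "set gs \<subseteq> carrier_vec n" "length gs = n" using gr bc(6) by auto
  have hd: "hd gs = u" unfolding gs_def bv by (rule gram_schmidt_hd[OF u])
  have g0: "gs ! 0 = u" using hd gs(3) n0 by (cases gs) auto
  have gin: "\<And>i. i < n \<Longrightarrow> gs ! i \<in> carrier_vec n" using gs by auto
  have orth: "\<And>i j. i < n \<Longrightarrow> j < n \<Longrightarrow> cinner (gs ! i) (gs ! j) = 0 \<longleftrightarrow> i \<noteq> j"
  proof -
    fix i j assume i: "i < n" and j: "j < n"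
    have "gs ! j \<bullet>c gs ! i = 0 \<longleftrightarrow> j \<noteq> i" using corthogonalD[OF gs(1)] i j gs(3) by auto
    thus "cinner (gs ! i) (gs ! j) = 0 \<longleftrightarrow> i \<noteq> j"
      using scalar_prod_c_cinner[OF gin[OF j] gin[OF i]] by auto
  qed
  define ws where "ws = map nz gs"
  have "length ws = n" using gs unfolding ws_def by simp
  moreover have "set ws \<subseteq> carrier_vec n" using gs unfolding ws_def by (auto intro: nz_carrier)
  moreover have "ws ! 0 = u" unfolding ws_def using n0 gs(3) g0 nz_unit[OF uu] by simp
  moreover have "\<forall>i<n. \<forall>j<n. cinner (ws!i) (ws!j) = (if i = j then 1 else 0)"
  proof (intro allI impI)
    fix i j assume i: "i < n" and j: "j < n"
    show "cinner (ws!i) (ws!j) = (if i = j then 1 else 0)"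
    proof (cases "i = j")
      case True
      then show ?thesis unfolding ws_def using i gs(3) nz_one orth[OF i i] by simp
    next
      case False
      have "cinner (nz (gs!i)) (nz (gs!j)) = 0"
        using nz_inner[of "gs!i" "gs!j"] carrier_vecD[OF gin[OF i]] carrier_vecD[OF gin[OF j]] orth[OF i j] False by simp
      then show ?thesis unfolding ws_def using i j gs(3) False by simp
    qed
  qed
  ultimately show ?thesis by blast
qed

lemma adj_mult_index:
  assumes "W \<in> carrier_mat k n" "M \<in> carrier_mat k m" "i < n" "j < m"
  shows "(cadjoint W * M) $$ (i,j) = cinner (col W i) (col M j)"
  using assms by (simp add: scalar_prod_def cinner_def atLeast0LessThan)

lemma onb_unitary:
  assumes ws: "length ws = n" "set ws \<subseteq> carrier_vec n"
    and on: "\<forall>i<n. \<forall>j<n. cinner (ws!i) (ws!j) = (if i = j then 1 else 0)"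
  shows "cadjoint (mat_of_cols n ws) * mat_of_cols n ws = 1\<^sub>m n"
    "mat_of_cols n ws * cadjoint (mat_of_cols n ws) = 1\<^sub>m n"
proof -
  define W where "W = mat_of_cols n ws"
  have W: "W \<in> carrier_mat n n" unfolding W_def using ws mat_of_cols_carrier(1)[of n ws] by simp
  have c: "\<And>i. i < n \<Longrightarrow> col W i = ws ! i" unfolding W_def using ws by (intro col_mat_of_cols) auto
  have 1: "cadjoint W * W = 1\<^sub>m n"
  proof (rule eq_matI)
    fix i j assume "i < dim_row (1\<^sub>m n)" "j < dim_col (1\<^sub>m n)"
    hence i: "i < n" and j: "j < n" by auto
    show "(cadjoint W * W) $$ (i,j) = 1\<^sub>m n $$ (i,j)"
      using adj_mult_index[OF W W i j] c[OF i] c[OF j] on i j by simp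
  qed (use W in auto)
  moreover have "W * cadjoint W = 1\<^sub>m n"
    using mat_mult_left_right_inverse[OF cadj_carrier[OF W] W 1] .
  ultimately show "cadjoint (mat_of_cols n ws) * mat_of_cols n ws = 1\<^sub>m n"
    "mat_of_cols n ws * cadjoint (mat_of_cols n ws) = 1\<^sub>m n" unfolding W_def by auto
qed


lemma blockdiag_mult:
  assumes "A1 \<in> carrier_mat a a" "A2 \<in> carrier_mat a a" "D1 \<in> carrier_mat d d" "D2 \<in> carrier_mat d d"
  shows "four_block_mat A1 (0\<^sub>m a d) (0\<^sub>m d a) D1 * four_block_mat A2 (0\<^sub>m a d) (0\<^sub>m d a) D2
       = four_block_mat (A1 * A2) (0\<^sub>m a d) (0\<^sub>m d a) (D1 * D2)"
  by (subst mult_four_block_mat[OF assms(1) zero_carrier_mat zero_carrier_mat assms(3)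
        assms(2) zero_carrier_mat zero_carrier_mat assms(4)])
     (use assms in \<open>simp add: right_mult_zero_mat left_mult_zero_mat\<close>)

lemma blockdiag_cadj:
  assumes "A \<in> carrier_mat a a" "D \<in> carrier_mat d d"
  shows "cadjoint (four_block_mat A (0\<^sub>m a d) (0\<^sub>m d a) D) = four_block_mat (cadjoint A) (0\<^sub>m a d) (0\<^sub>m d a) (cadjoint D)"
proof (rule eq_matI)
  fix i j assume i: "i < dim_row (four_block_mat (cadjoint A) (0\<^sub>m a d) (0\<^sub>m d a) (cadjoint D))"
    and j: "j < dim_col (four_block_mat (cadjoint A) (0\<^sub>m a d) (0\<^sub>m d a) (cadjoint D))"
  have i': "i < a + d" and j': "j < a + d" using i j assms by auto
  show "cadjoint (four_block_mat A (0\<^sub>m a d) (0\<^sub>m d a) D) $$ (i, j) =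
      four_block_mat (cadjoint A) (0\<^sub>m a d) (0\<^sub>m d a) (cadjoint D) $$ (i, j)"
    using i' j' assms by (simp add: cadj_index)
qed (use assms in auto)

theorem spectral:
  fixes A :: "complex mat"
  assumes "A \<in> carrier_mat n n" "cadjoint A = A"
  shows "\<exists>U. U \<in> carrier_mat n n \<and> cadjoint U * U = 1\<^sub>m n \<and> U * cadjoint U = 1\<^sub>m n \<and>
     (\<forall>i<n. \<forall>j<n. i \<noteq> j \<longrightarrow> (cadjoint U * A * U) $$ (i,j) = 0)"
  using assms
proof (induction n arbitrary: A)
  case 0
  show ?case by (intro exI[of _ "1\<^sub>m 0"]) auto
next
  case (Suc m)
  let ?n = "Suc m"
  have A: "A \<in> carrier_mat ?n ?n" and hA: "cadjoint A = A" using Suc.prems by auto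
  obtain e u where u: "u \<in> carrier_vec ?n" "cinner u u = 1" and eu: "A *\<^sub>v u = e \<cdot>\<^sub>v u"
    using unit_eigvec[OF A] by auto
  obtain ws where ws: "length ws = ?n" "set ws \<subseteq> carrier_vec ?n" "ws ! 0 = u"
    and on: "\<forall>i<?n. \<forall>j<?n. cinner (ws!i) (ws!j) = (if i = j then 1 else 0)"
    using onb_extend[OF u] by blast
  define W where "W = mat_of_cols ?n ws"
  have W: "W \<in> carrier_mat ?n ?n" using ws mat_of_cols_carrier(1)[of ?n ws] by (simp add: W_def)
  have WW: "cadjoint W * W = 1\<^sub>m ?n" "W * cadjoint W = 1\<^sub>m ?n"
    using onb_unitary[OF ws(1,2) on] unfolding W_def by auto
  have cW: "cadjoint W \<in> carrier_mat ?n ?n" using cadj_carrier[OF W] .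
  have colW: "\<And>i. i < ?n \<Longrightarrow> col W i = ws ! i" unfolding W_def using ws by (intro col_mat_of_cols) auto
  define A' where "A' = cadjoint W * A * W"
  have A': "A' \<in> carrier_mat ?n ?n" using A W cW by (simp add: A'_def)
  have A'2: "A' = cadjoint W * (A * W)" unfolding A'_def using A W cW by simp
  have hA': "cadjoint A' = A'"
  proof -
    have "cadjoint A' = cadjoint (A * W) * cadjoint (cadjoint W)"
      unfolding A'2 using cadj_mult[OF cW, of "A * W" ?n] A W by simp
    also have "\<dots> = (cadjoint W * cadjoint A) * W" using cadj_mult[OF A W] by simp
    also have "\<dots> = A'" unfolding hA A'_def ..
    finally show ?thesis .
  qed
  have col0: "\<And>i. i < ?n \<Longrightarrow> A' $$ (i,0) = (if i = 0 then e else 0)"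
  proof -
    fix i assume i: "i < ?n"
    have AW: "A * W \<in> carrier_mat ?n ?n" using A W by simp
    have "A' $$ (i,0) = cinner (col W i) (col (A * W) 0)"
      unfolding A'2 by (rule adj_mult_index[OF W AW i]) simp
    also have "col (A * W) 0 = A *\<^sub>v col W 0" by (rule col_mult2[OF A W]) simp
    also have "col W 0 = u" using colW[of 0] ws(3) by simp
    also have "col W i = ws ! i" using colW[OF i] .
    also have "cinner (ws ! i) (A *\<^sub>v u) = e * cinner (ws ! i) (ws ! 0)"
      unfolding eu ws(3) by (rule cinner_smult_right)
    also have "\<dots> = (if i = 0 then e else 0)" using on i by simp
    finally show "A' $$ (i,0) = (if i = 0 then e else 0)" .
  qed
  have row0: "\<And>j. j < ?n \<Longrightarrow> A' $$ (0,j) = (if j = 0 then e else 0)"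
  proof -
    fix j assume j: "j < ?n"
    show "A' $$ (0,j) = (if j = 0 then e else 0)"
    proof (cases "j = 0")
      case True thus ?thesis using col0[of 0] by simp
    next
      case False
      have "cadjoint A' $$ (0,j) = cnj (A' $$ (j,0))" using A' j by (simp add: cadj_index)
      thus ?thesis using hA' col0[OF j] False by simp
    qed
  qed
  define A3 where "A3 = mat m m (\<lambda>(i,j). A' $$ (Suc i, Suc j))"
  have A3: "A3 \<in> carrier_mat m m" unfolding A3_def by simp
  have hA3: "cadjoint A3 = A3"
  proof (rule eq_matI)
    fix i j assume "i < dim_row A3" "j < dim_col A3"
    hence i: "i < m" and j: "j < m" using A3 by auto
    have "cadjoint A' $$ (Suc i, Suc j) = cnj (A' $$ (Suc j, Suc i))" using A' i j by (simp add: cadj_index)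
    hence "A' $$ (Suc i, Suc j) = cnj (A' $$ (Suc j, Suc i))" using hA' by simp
    thus "cadjoint A3 $$ (i,j) = A3 $$ (i,j)" using i j A3 by (simp add: A3_def cadj_index)
  qed (use A3 in auto)
  obtain U3 where U3: "U3 \<in> carrier_mat m m" "cadjoint U3 * U3 = 1\<^sub>m m" "U3 * cadjoint U3 = 1\<^sub>m m"
    and d3: "\<forall>i<m. \<forall>j<m. i \<noteq> j \<longrightarrow> (cadjoint U3 * A3 * U3) $$ (i,j) = 0"
    using Suc.IH[OF A3 hA3] by blast
  define E where "E = mat 1 1 (\<lambda>_. e)"
  have E: "E \<in> carrier_mat 1 1" unfolding E_def by simp
  have A'b: "A' = four_block_mat E (0\<^sub>m 1 m) (0\<^sub>m m 1) A3"
  proof (rule eq_matI)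
    fix i j assume "i < dim_row (four_block_mat E (0\<^sub>m 1 m) (0\<^sub>m m 1) A3)"
      "j < dim_col (four_block_mat E (0\<^sub>m 1 m) (0\<^sub>m m 1) A3)"
    hence i: "i < ?n" and j: "j < ?n" using E A3 by auto
    show "A' $$ (i,j) = four_block_mat E (0\<^sub>m 1 m) (0\<^sub>m m 1) A3 $$ (i,j)"
    proof (cases "i = 0")
      case True thus ?thesis using row0[OF j] E A3 j by (simp add: E_def)
    next
      case False
      then obtain i' where i': "i = Suc i'" by (cases i) auto
      show ?thesis
      proof (cases "j = 0")
        case True thus ?thesis using col0[OF i] E A3 i False by simp
      next
        case False
        then obtain j' where j': "j = Suc j'" by (cases j) auto
        show ?thesis using i j E A3 i' j' by (simp add: A3_def)
      qed
    qed
  qed (use A' E A3 in auto)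
  define F where "F = four_block_mat (1\<^sub>m 1) (0\<^sub>m 1 m) (0\<^sub>m m 1) U3"
  have F: "F \<in> carrier_mat ?n ?n" unfolding F_def using four_block_carrier_mat[OF one_carrier_mat[of 1] U3(1), of "0\<^sub>m 1 m" "0\<^sub>m m 1"] by simp
  have cF: "cadjoint F = four_block_mat (1\<^sub>m 1) (0\<^sub>m 1 m) (0\<^sub>m m 1) (cadjoint U3)"
    unfolding F_def by (subst blockdiag_cadj[OF one_carrier_mat U3(1)]) simp
  have cFc: "cadjoint F \<in> carrier_mat ?n ?n" using cadj_carrier[OF F] .
  have FF: "cadjoint F * F = 1\<^sub>m ?n"
    unfolding cF unfolding F_def
    by (subst blockdiag_mult[OF one_carrier_mat one_carrier_mat cadj_carrier[OF U3(1)] U3(1)]) (simp add: U3)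
  have FF2: "F * cadjoint F = 1\<^sub>m ?n"
    unfolding cF unfolding F_def
    by (subst blockdiag_mult[OF one_carrier_mat one_carrier_mat U3(1) cadj_carrier[OF U3(1)]]) (simp add: U3)
  define U where "U = W * F"
  have U: "U \<in> carrier_mat ?n ?n" unfolding U_def using W F by simp
  have cU: "cadjoint U = cadjoint F * cadjoint W" unfolding U_def by (rule cadj_mult[OF W F])
  have "cadjoint U * U = cadjoint F * ((cadjoint W * W) * F)"
    unfolding cU unfolding U_def using W F cW cFc by (simp add: assoc_mult_mat[of _ ?n ?n _ ?n _ ?n])
  also have "\<dots> = 1\<^sub>m ?n" using WW FF F by simp
  finally have UU: "cadjoint U * U = 1\<^sub>m ?n" .
  have "U * cadjoint U = W * ((F * cadjoint F) * cadjoint W)"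
    unfolding cU unfolding U_def using W F cW cFc by (simp add: assoc_mult_mat[of _ ?n ?n _ ?n _ ?n])
  also have "\<dots> = 1\<^sub>m ?n" using WW FF2 left_mult_one_mat[OF cW] by simp
  finally have UU2: "U * cadjoint U = 1\<^sub>m ?n" .
  have "cadjoint U * A * U = cadjoint F * A' * F"
    unfolding cU unfolding U_def A'_def using W F cW cFc A by (simp add: assoc_mult_mat[of _ ?n ?n _ ?n _ ?n])
  also have "\<dots> = four_block_mat (1\<^sub>m 1 * E * 1\<^sub>m 1) (0\<^sub>m 1 m) (0\<^sub>m m 1) (cadjoint U3 * A3 * U3)"
    unfolding cF A'b unfolding F_def
    by (subst blockdiag_mult[OF one_carrier_mat E cadj_carrier[OF U3(1)] A3],
        subst blockdiag_mult[OF _ one_carrier_mat _ U3(1)]) (use E A3 U3 cadj_carrier[OF U3(1)] in simp_all)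
  finally have D: "cadjoint U * A * U = four_block_mat (1\<^sub>m 1 * E * 1\<^sub>m 1) (0\<^sub>m 1 m) (0\<^sub>m m 1) (cadjoint U3 * A3 * U3)" .
  have "\<forall>i<?n. \<forall>j<?n. i \<noteq> j \<longrightarrow> (cadjoint U * A * U) $$ (i,j) = 0"
  proof (intro allI impI)
    fix i j assume i: "i < ?n" and j: "j < ?n" and ij: "i \<noteq> j"
    have c3: "cadjoint U3 * A3 * U3 \<in> carrier_mat m m" using U3 A3 cadj_carrier[OF U3(1)] by simp
    have c1: "1\<^sub>m 1 * E * 1\<^sub>m 1 \<in> carrier_mat 1 1" using E by simp
    show "(cadjoint U * A * U) $$ (i,j) = 0"
    proof (cases "i = 0 \<or> j = 0")
      case True thus ?thesis unfolding D using i j ij c1 c3 by auto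
    next
      case False
      then obtain i' j' where i': "i = Suc i'" and j': "j = Suc j'" by (cases i; cases j) auto
      have "(cadjoint U3 * A3 * U3) $$ (i', j') = 0" using d3 i j ij i' j' by auto
      thus ?thesis unfolding D using i j i' j' carrier_matD[OF c1] carrier_matD[OF c3] by simp
    qed
  qed
  with U UU UU2 show ?case by blast
qed


definition dmat :: "nat \<Rightarrow> (nat \<Rightarrow> real) \<Rightarrow> complex mat" where
  "dmat n f = mat n n (\<lambda>(i,j). if i = j then complex_of_real (f i) else 0)"

lemma dmat_carrier: "dmat n f \<in> carrier_mat n n"
  by (simp add: dmat_def)

lemma dmat_index: "i < n \<Longrightarrow> j < n \<Longrightarrow> dmat n f $$ (i,j) = (if i = j then complex_of_real (f i) else 0)"
  by (simp add: dmat_def)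

lemma sum_single: fixes c :: complex and h :: "nat \<Rightarrow> complex" assumes "i < n"
  shows "(\<Sum>k\<in>{0..<n}. (if i = k then c else 0) * h k) = c * h i"
proof -
  have "(\<Sum>k\<in>{0..<n}. (if i = k then c else 0) * h k) = (\<Sum>k\<in>{0..<n}. if k = i then c * h k else 0)"
    by (rule sum.cong) auto
  also have "\<dots> = c * h i" using assms by (subst sum.delta) auto
  finally show ?thesis .
qed

lemma cadj_dmat: "cadjoint (dmat n f) = dmat n f"
  by (rule eq_matI) (auto simp: dmat_def cadj_index)

lemma dmat_mult: "dmat n f * dmat n g = dmat n (\<lambda>i. f i * g i)"
proof (rule eq_matI)
  fix i j assume "i < dim_row (dmat n (\<lambda>i. f i * g i))" "j < dim_col (dmat n (\<lambda>i. f i * g i))"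
  hence i: "i < n" and j: "j < n" by (auto simp: dmat_def)
  have "(dmat n f * dmat n g) $$ (i,j) = (\<Sum>k\<in>{0..<n}. (if i = k then complex_of_real (f i) else 0) * dmat n g $$ (k,j))"
    using i j by (simp add: dmat_def scalar_prod_def)
  also have "\<dots> = complex_of_real (f i) * dmat n g $$ (i,j)" by (rule sum_single[OF i])
  also have "\<dots> = dmat n (\<lambda>i. f i * g i) $$ (i,j)" using i j by (simp add: dmat_def)
  finally show "(dmat n f * dmat n g) $$ (i,j) = dmat n (\<lambda>i. f i * g i) $$ (i,j)" .
qed (auto simp: dmat_def)

lemma dmat_one: "dmat n (\<lambda>_. 1) = 1\<^sub>m n"
  by (rule eq_matI) (auto simp: dmat_def)

lemma dmat_mult_vec: assumes "v \<in> carrier_vec n" "i < n"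
  shows "(dmat n f *\<^sub>v v) $ i = complex_of_real (f i) * v $ i"
proof -
  have "(dmat n f *\<^sub>v v) $ i = (\<Sum>k\<in>{0..<n}. (if i = k then complex_of_real (f i) else 0) * v $ k)"
    using assms by (simp add: dmat_def scalar_prod_def)
  also have "\<dots> = complex_of_real (f i) * v $ i" by (rule sum_single[OF assms(2)])
  finally show ?thesis .
qed

lemma dmat_quad: assumes "y \<in> carrier_vec n"
  shows "cinner y (dmat n f *\<^sub>v y) = complex_of_real (\<Sum>i<n. f i * (cmod (y $ i))^2)"
proof -
  have "cinner y (dmat n f *\<^sub>v y) = (\<Sum>i<n. cnj (y $ i) * (complex_of_real (f i) * y $ i))"
    unfolding cinner_def
  proof (rule sum.cong)
    show "{..<dim_vec (dmat n f *\<^sub>v y)} = {..<n}" by (simp add: dmat_def)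
    fix i assume "i \<in> {..<n}"
    hence i: "i < n" by simp
    show "cnj (y $ i) * (dmat n f *\<^sub>v y) $ i = cnj (y $ i) * (complex_of_real (f i) * y $ i)"
      using dmat_mult_vec[OF assms i] by simp
  qed
  also have "\<dots> = (\<Sum>i<n. complex_of_real (f i * (cmod (y $ i))^2))"
  proof (rule sum.cong)
    fix i
    have "cnj (y $ i) * y $ i = complex_of_real ((cmod (y $ i))^2)"
      by (metis complex_norm_square mult.commute)
    thus "cnj (y $ i) * (complex_of_real (f i) * y $ i) = complex_of_real (f i * (cmod (y $ i))^2)"
      by (simp add: mult.left_commute)
  qed simp
  also have "\<dots> = complex_of_real (\<Sum>i<n. f i * (cmod (y $ i))^2)" by simp
  finally show ?thesis .
qed

lemma QF: assumes U: "U \<in> carrier_mat n n" and v: "v \<in> carrier_vec n"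
  shows "cinner v ((U * dmat n f * cadjoint U) *\<^sub>v v) =
     complex_of_real (\<Sum>i<n. f i * (cmod ((cadjoint U *\<^sub>v v) $ i))^2)"
proof -
  have cU: "cadjoint U \<in> carrier_mat n n" using cadj_carrier[OF U] .
  have D: "dmat n f \<in> carrier_mat n n" by (rule dmat_carrier)
  have y: "cadjoint U *\<^sub>v v \<in> carrier_vec n" using cU v by simp
  have "(U * dmat n f * cadjoint U) *\<^sub>v v = U *\<^sub>v (dmat n f *\<^sub>v (cadjoint U *\<^sub>v v))"
    using U D cU v by (simp add: assoc_mult_mat_vec[of _ n n _ n])
  hence "cinner v ((U * dmat n f * cadjoint U) *\<^sub>v v) = cinner v (U *\<^sub>v (dmat n f *\<^sub>v (cadjoint U *\<^sub>v v)))"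
    by simp
  also have "\<dots> = cinner (cadjoint U *\<^sub>v v) (dmat n f *\<^sub>v (cadjoint U *\<^sub>v v))"
    by (rule cinner_mult[OF U v]) (use D y in simp)
  also have "\<dots> = complex_of_real (\<Sum>i<n. f i * (cmod ((cadjoint U *\<^sub>v v) $ i))^2)"
    by (rule dmat_quad[OF y])
  finally show ?thesis .
qed

lemma Re_cinner_sum: "dim_vec p = dim_vec q \<Longrightarrow>
  Re (cinner p q) = (\<Sum>i<dim_vec q. Re (p $ i) * Re (q $ i) + Im (p $ i) * Im (q $ i))"
  by (simp add: cinner_def Re_sum)

lemma CS_weighted: assumes d: "dim_vec p = dim_vec q" and k: "k > 0"
  shows "2 * Re (cinner p q) \<le> k * Re (cinner p p) + Re (cinner q q) / k"
proof -
  have t: "\<And>a b c e :: real. 2 * (a * c + b * e) \<le> k * (a * a + b * b) + (c * c + e * e) / k"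
  proof -
    fix a b c e :: real
    have "0 \<le> (k * a - c)^2 + (k * b - e)^2" by simp
    hence "2 * k * (a * c + b * e) \<le> k * (k * (a * a + b * b)) + (c * c + e * e)"
      by (simp add: power2_eq_square algebra_simps)
    hence "(2 * k * (a * c + b * e)) / k \<le> (k * (k * (a * a + b * b)) + (c * c + e * e)) / k"
      using k by (intro divide_right_mono) auto
    moreover have "(2 * k * (a * c + b * e)) / k = 2 * (a * c + b * e)" using k by simp
    moreover have "(k * (k * (a * a + b * b)) + (c * c + e * e)) / k = k * (a * a + b * b) + (c * c + e * e) / k"
      using k by (simp add: field_simps)
    ultimately show "2 * (a * c + b * e) \<le> k * (a * a + b * b) + (c * c + e * e) / k" by simp
  qed
  have "2 * Re (cinner p q) = (\<Sum>i<dim_vec q. 2 * (Re (p $ i) * Re (q $ i) + Im (p $ i) * Im (q $ i)))"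
    using Re_cinner_sum[OF d] by (simp add: sum_distrib_left)
  also have "\<dots> \<le> (\<Sum>i<dim_vec q. k * (Re (p $ i) * Re (p $ i) + Im (p $ i) * Im (p $ i)) +
       (Re (q $ i) * Re (q $ i) + Im (q $ i) * Im (q $ i)) / k)"
    by (rule sum_mono) (rule t)
  also have "\<dots> = k * Re (cinner p p) + Re (cinner q q) / k"
  proof -
    have e1: "Re (cinner p p) = (\<Sum>i<dim_vec q. Re (p $ i) * Re (p $ i) + Im (p $ i) * Im (p $ i))"
      using Re_cinner_sum[OF refl, of p] unfolding d .
    have e2: "Re (cinner q q) = (\<Sum>i<dim_vec q. Re (q $ i) * Re (q $ i) + Im (q $ i) * Im (q $ i))"
      using Re_cinner_sum[OF refl, of q] .
    show ?thesis unfolding e1 e2 by (subst sum.distrib, subst sum_distrib_left, subst sum_divide_distrib, rule refl)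
  qed
  finally show ?thesis .
qed

lemma sq_split: fixes x y a :: real assumes a: "a > 0"
  shows "(x + y)^2 \<le> (1 + a) * x^2 + (1 + 1 / a) * y^2"
proof -
  have "0 \<le> (a * x - y)^2" by simp
  hence "2 * a * x * y \<le> a * (a * x^2) + y^2" by (simp add: power2_eq_square algebra_simps)
  hence "(2 * a * x * y) / a \<le> (a * (a * x^2) + y^2) / a" using a by (intro divide_right_mono) auto
  moreover have "(2 * a * x * y) / a = 2 * x * y" using a by simp
  moreover have "(a * (a * x^2) + y^2) / a = a * x^2 + y^2 / a" using a by (simp add: field_simps)
  ultimately have "2 * x * y \<le> a * x^2 + y^2 / a" by simp
  thus ?thesis by (simp add: power2_eq_square algebra_simps)
qed

lemma cmod_sq_split: assumes a: "a > 0"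
  shows "(cmod (u + w))^2 \<le> (1 + a) * (cmod u)^2 + (1 + 1 / a) * (cmod w)^2"
proof -
  have "cmod (u + w) \<le> cmod u + cmod w" by (rule norm_triangle_ineq)
  hence "(cmod (u + w))^2 \<le> (cmod u + cmod w)^2" by (simp add: power_mono)
  also have "\<dots> \<le> (1 + a) * (cmod u)^2 + (1 + 1 / a) * (cmod w)^2" by (rule sq_split[OF a])
  finally show ?thesis .
qed

lemma msum_mult_vec: assumes "finite I" "\<And>k. k \<in> I \<Longrightarrow> F k \<in> carrier_mat n n" "v \<in> carrier_vec n" "i < n"
  shows "(msum n F I *\<^sub>v v) $ i = (\<Sum>k\<in>I. (F k *\<^sub>v v) $ i)"
proof -
  have "(msum n F I *\<^sub>v v) $ i = (\<Sum>j\<in>{0..<n}. (\<Sum>k\<in>I. F k $$ (i,j)) * v $ j)"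
    using assms by (simp add: msum_def scalar_prod_def)
  also have "\<dots> = (\<Sum>k\<in>I. \<Sum>j\<in>{0..<n}. F k $$ (i,j) * v $ j)"
    by (simp add: sum_distrib_right) (rule sum.swap)
  also have "\<dots> = (\<Sum>k\<in>I. (F k *\<^sub>v v) $ i)"
  proof (rule sum.cong)
    fix k assume k: "k \<in> I"
    note Fk = carrier_matD[OF assms(2)[OF k]]
    show "(\<Sum>j\<in>{0..<n}. F k $$ (i,j) * v $ j) = (F k *\<^sub>v v) $ i"
      using Fk assms(3,4) by (simp add: scalar_prod_def)
  qed simp
  finally show ?thesis .
qed

lemma msum_quad: assumes "finite I" "\<And>k. k \<in> I \<Longrightarrow> F k \<in> carrier_mat n n" "v \<in> carrier_vec n"
  shows "cinner v (msum n F I *\<^sub>v v) = (\<Sum>k\<in>I. cinner v (F k *\<^sub>v v))"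
proof -
  have "cinner v (msum n F I *\<^sub>v v) = (\<Sum>i<n. cnj (v $ i) * (\<Sum>k\<in>I. (F k *\<^sub>v v) $ i))"
    unfolding cinner_def
  proof (rule sum.cong)
    show "{..<dim_vec (msum n F I *\<^sub>v v)} = {..<n}" by (simp add: msum_def)
    fix i assume "i \<in> {..<n}"
    hence i: "i < n" by simp
    show "cnj (v $ i) * (msum n F I *\<^sub>v v) $ i = cnj (v $ i) * (\<Sum>k\<in>I. (F k *\<^sub>v v) $ i)"
      using msum_mult_vec[OF assms i] by simp
  qed
  also have "\<dots> = (\<Sum>k\<in>I. \<Sum>i<n. cnj (v $ i) * (F k *\<^sub>v v) $ i)"
    by (simp add: sum_distrib_left) (rule sum.swap)
  also have "\<dots> = (\<Sum>k\<in>I. cinner v (F k *\<^sub>v v))"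
    unfolding cinner_def using assms by (intro sum.cong) auto
  finally show ?thesis .
qed

lemma msum_carrier: "msum n F I \<in> carrier_mat n n"
  by (simp add: msum_def)

lemma msum_herm: assumes "\<And>k. k \<in> I \<Longrightarrow> F k \<in> carrier_mat n n" "\<And>k. k \<in> I \<Longrightarrow> cadjoint (F k) = F k"
  shows "cadjoint (msum n F I) = msum n F I"
proof (rule eq_matI)
  fix i j assume "i < dim_row (msum n F I)" "j < dim_col (msum n F I)"
  hence i: "i < n" and j: "j < n" by (auto simp: msum_def)
  have "\<And>k. k \<in> I \<Longrightarrow> F k $$ (i,j) = cnj (F k $$ (j,i))"
  proof -
    fix k assume k: "k \<in> I"
    have "cadjoint (F k) $$ (i,j) = cnj (F k $$ (j,i))" using assms(1)[OF k] i j by (simp add: cadj_index)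
    thus "F k $$ (i,j) = cnj (F k $$ (j,i))" using assms(2)[OF k] by simp
  qed
  thus "cadjoint (msum n F I) $$ (i,j) = msum n F I $$ (i,j)"
    using i j by (simp add: msum_def cadj_index)
qed (auto simp: msum_def)

lemma smult_mat_vec: "A \<in> carrier_mat nr nc \<Longrightarrow> v \<in> carrier_vec nc \<Longrightarrow> (k \<cdot>\<^sub>m A) *\<^sub>v v = k \<cdot>\<^sub>v (A *\<^sub>v v)"
  by (intro eq_vecI) (auto simp: scalar_prod_def sum_distrib_left mult.assoc)


lemma herm_diag:
  assumes A: "A \<in> carrier_mat n n" and hA: "cadjoint A = A"
  shows "\<exists>U \<mu>. U \<in> carrier_mat n n \<and> cadjoint U * U = 1\<^sub>m n \<and> U * cadjoint U = 1\<^sub>m n \<and>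
     A = U * dmat n \<mu> * cadjoint U \<and> (\<forall>i<n. \<mu> i = Re (cinner (col U i) (A *\<^sub>v col U i)))"
proof -
  obtain U where U: "U \<in> carrier_mat n n" "cadjoint U * U = 1\<^sub>m n" "U * cadjoint U = 1\<^sub>m n"
    and off: "\<forall>i<n. \<forall>j<n. i \<noteq> j \<longrightarrow> (cadjoint U * A * U) $$ (i,j) = 0"
    using spectral[OF A hA] by blast
  have cU: "cadjoint U \<in> carrier_mat n n" using cadj_carrier[OF U(1)] .
  define D where "D = cadjoint U * A * U"
  have D: "D \<in> carrier_mat n n" unfolding D_def using U cU A by simp
  have D2: "D = cadjoint U * (A * U)" unfolding D_def using U cU A by simp
  have hD: "cadjoint D = D"
  proof -
    have "cadjoint D = cadjoint (A * U) * cadjoint (cadjoint U)"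
      unfolding D2 using cadj_mult[OF cU, of "A * U" n] A U by simp
    also have "\<dots> = (cadjoint U * cadjoint A) * U" using cadj_mult[OF A U(1)] by simp
    also have "\<dots> = D" unfolding hA D_def ..
    finally show ?thesis .
  qed
  define \<mu> where "\<mu> i = Re (D $$ (i,i))" for i
  have Dd: "D = dmat n \<mu>"
  proof (rule eq_matI)
    fix i j assume "i < dim_row (dmat n \<mu>)" "j < dim_col (dmat n \<mu>)"
    hence i: "i < n" and j: "j < n" by (auto simp: dmat_def)
    show "D $$ (i,j) = dmat n \<mu> $$ (i,j)"
    proof (cases "i = j")
      case True
      have "cadjoint D $$ (i,i) = cnj (D $$ (i,i))" using D i by (simp add: cadj_index)
      hence "D $$ (i,i) = cnj (D $$ (i,i))" using hD by simp
      hence "Im (D $$ (i,i)) = 0" by (metis Reals_cnj_iff complex_is_Real_iff)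
      hence "D $$ (i,i) = complex_of_real (\<mu> i)" unfolding \<mu>_def by (simp add: complex_eq_iff)
      thus ?thesis using True i by (simp add: dmat_def)
    next
      case False
      thus ?thesis using off i j by (simp add: D_def dmat_def)
    qed
  qed (use D in \<open>auto simp: dmat_def\<close>)
  have "U * dmat n \<mu> * cadjoint U = U * (cadjoint U * A * U) * cadjoint U"
    unfolding Dd[symmetric] D_def ..
  also have "\<dots> = (U * cadjoint U) * A * (U * cadjoint U)"
    using U(1) cU A by (simp add: assoc_mult_mat[of _ n n _ n _ n])
  also have "\<dots> = A" unfolding U(3) using A by simp
  finally have AU: "A = U * dmat n \<mu> * cadjoint U" by simp
  have "\<forall>i<n. \<mu> i = Re (cinner (col U i) (A *\<^sub>v col U i))"
  proof (intro allI impI)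
    fix i assume i: "i < n"
    have AUc: "A * U \<in> carrier_mat n n" using A U by simp
    have "D $$ (i,i) = cinner (col U i) (col (A * U) i)"
      unfolding D2 by (rule adj_mult_index[OF U(1) AUc i i])
    also have "col (A * U) i = A *\<^sub>v col U i" by (rule col_mult2[OF A U(1) i])
    finally show "\<mu> i = Re (cinner (col U i) (A *\<^sub>v col U i))" unfolding \<mu>_def by simp
  qed
  with U AU show ?thesis by blast
qed

lemma dmat_dims[simp]: "dim_row (dmat n f) = n" "dim_col (dmat n f) = n"
  by (simp_all add: dmat_def)

lemma mult_dmat_diag: assumes "M \<in> carrier_mat n n" "k < n"
  shows "(M * dmat n f) $$ (k,k) = M $$ (k,k) * complex_of_real (f k)"
proof -
  have "(M * dmat n f) $$ (k,k) = (\<Sum>l\<in>{0..<n}. M $$ (k,l) * dmat n f $$ (l,k))"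
    using assms by (simp add: scalar_prod_def)
  also have "\<dots> = (\<Sum>l\<in>{0..<n}. (if k = l then complex_of_real (f k) else 0) * M $$ (k,l))"
    using assms by (intro sum.cong) (auto simp: dmat_index)
  also have "\<dots> = complex_of_real (f k) * M $$ (k,k)" by (rule sum_single[OF assms(2)])
  finally show ?thesis by (simp add: mult.commute)
qed

lemma trace_avg:
  fixes R :: "complex mat"
  assumes R: "R \<in> carrier_mat n n" and hR: "cadjoint R = R"
  shows "\<exists>V p. V \<in> carrier_mat n n \<and> cadjoint V * V = 1\<^sub>m n \<and>
     (\<forall>k<n. p k = Re (cinner (col V k) (R *\<^sub>v col V k))) \<and>
     (\<forall>X :: complex mat. X \<in> carrier_mat n n \<longrightarrow> ctrace (X * R) = (\<Sum>k<n. complex_of_real (p k) * cinner (col V k) (X *\<^sub>v col V k)))"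
proof -
  obtain V p where V: "V \<in> carrier_mat n n" "cadjoint V * V = 1\<^sub>m n" "V * cadjoint V = 1\<^sub>m n"
    and RV: "R = V * dmat n p * cadjoint V" and pk: "\<forall>k<n. p k = Re (cinner (col V k) (R *\<^sub>v col V k))"
    using herm_diag[OF R hR] by blast
  have cV: "cadjoint V \<in> carrier_mat n n" using cadj_carrier[OF V(1)] .
  have Dp: "dmat n p \<in> carrier_mat n n" by (rule dmat_carrier)
  have "\<forall>X :: complex mat. X \<in> carrier_mat n n \<longrightarrow> ctrace (X * R) = (\<Sum>k<n. complex_of_real (p k) * cinner (col V k) (X *\<^sub>v col V k))"
  proof (intro allI impI)
    fix X :: "complex mat" assume X: "X \<in> carrier_mat n n"
    have XV: "X * V \<in> carrier_mat n n" using X V by simp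
    have "ctrace (X * R) = ctrace ((X * V * dmat n p) * cadjoint V)"
      unfolding RV using X V cV Dp by (simp add: assoc_mult_mat[of _ n n _ n _ n])
    also have "\<dots> = ctrace (cadjoint V * (X * V * dmat n p))"
      by (rule ctrace_comm) (use X V cV Dp in simp_all)
    also have "cadjoint V * (X * V * dmat n p) = (cadjoint V * (X * V)) * dmat n p"
      using X V cV Dp by (simp add: assoc_mult_mat[of _ n n _ n _ n])
    also have "ctrace \<dots> = (\<Sum>k<n. (cadjoint V * (X * V) * dmat n p) $$ (k,k))"
      using X V cV Dp by (simp add: ctrace_def)
    also have "\<dots> = (\<Sum>k<n. complex_of_real (p k) * cinner (col V k) (X *\<^sub>v col V k))"
    proof (rule sum.cong)
      fix k assume "k \<in> {..<n}"
      hence k: "k < n" by simp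
      have M: "cadjoint V * (X * V) \<in> carrier_mat n n" using cV XV by simp
      have "(cadjoint V * (X * V) * dmat n p) $$ (k,k) = (cadjoint V * (X * V)) $$ (k,k) * complex_of_real (p k)"
        by (rule mult_dmat_diag[OF M k])
      also have "(cadjoint V * (X * V)) $$ (k,k) = cinner (col V k) (col (X * V) k)"
        by (rule adj_mult_index[OF V(1) XV k k])
      also have "col (X * V) k = X *\<^sub>v col V k" by (rule col_mult2[OF X V(1) k])
      finally show "(cadjoint V * (X * V) * dmat n p) $$ (k,k) = complex_of_real (p k) * cinner (col V k) (X *\<^sub>v col V k)"
        by (simp add: mult.commute)
    qed simp
    finally show "ctrace (X * R) = (\<Sum>k<n. complex_of_real (p k) * cinner (col V k) (X *\<^sub>v col V k))" .
  qed
  with V pk show ?thesis by blast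
qed

lemma unitary_col_unit: assumes "V \<in> carrier_mat n n" "cadjoint V * V = 1\<^sub>m n" "k < n"
  shows "cinner (col V k) (col V k) = 1"
  using adj_mult_index[OF assms(1) assms(1) assms(3) assms(3)] assms(2) assms(3) by simp

lemma norm_coord: assumes U: "U \<in> carrier_mat n n" "U * cadjoint U = 1\<^sub>m n" and v: "v \<in> carrier_vec n"
  shows "Re (cinner v v) = (\<Sum>i<n. (cmod ((cadjoint U *\<^sub>v v) $ i))^2)"
proof -
  have "U * dmat n (\<lambda>_. 1) * cadjoint U = 1\<^sub>m n" using U by (simp add: dmat_one)
  hence "cinner v v = cinner v ((U * dmat n (\<lambda>_. 1) * cadjoint U) *\<^sub>v v)" using v by simp
  also have "\<dots> = complex_of_real (\<Sum>i<n. 1 * (cmod ((cadjoint U *\<^sub>v v) $ i))^2)" by (rule QF[OF U(1) v])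
  finally show ?thesis by simp
qed

lemma herm_cinner: assumes "M \<in> carrier_mat n n" "cadjoint M = M" "x \<in> carrier_vec n" "y \<in> carrier_vec n"
  shows "cinner (M *\<^sub>v x) y = cinner x (M *\<^sub>v y)"
  using cinner_mult[OF assms(1) assms(3) assms(4)] assms(2) by simp

lemma proj_sq: assumes P: "P \<in> carrier_mat n n" "cadjoint P = P" "P * P = P" and v: "v \<in> carrier_vec n"
  shows "cinner (P *\<^sub>v v) (P *\<^sub>v v) = cinner v (P *\<^sub>v v)"
proof -
  have "cinner v (P *\<^sub>v v) = cinner v ((P * P) *\<^sub>v v)" using P by simp
  also have "\<dots> = cinner v (P *\<^sub>v (P *\<^sub>v v))" by (simp only: assoc_mult_mat_vec[OF P(1) P(1) v])
  also have "\<dots> = cinner (P *\<^sub>v v) (P *\<^sub>v v)" using herm_cinner[OF P(1,2) v, of "P *\<^sub>v v"] P v by simp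
  finally show ?thesis by simp
qed


lemma vec_bound:
  fixes U Pi :: "complex mat" and \<mu> :: "nat \<Rightarrow> real" and t c a :: real and \<phi> :: "complex vec"
  assumes U: "U \<in> carrier_mat n n" "cadjoint U * U = 1\<^sub>m n" "U * cadjoint U = 1\<^sub>m n"
    and Pi: "Pi \<in> carrier_mat n n" "cadjoint Pi = Pi" "Pi * Pi = Pi"
    and PiA: "\<And>v. v \<in> carrier_vec n \<Longrightarrow> Re (cinner v (Pi *\<^sub>v v)) \<le> Re (cinner v ((U * dmat n \<mu> * cadjoint U) *\<^sub>v v))"
    and c: "c > 0" and ct: "c * t = 1" and a: "a > 0"
    and \<phi>: "\<phi> \<in> carrier_vec n" "cinner \<phi> \<phi> = 1"
  shows "Re (cinner \<phi> ((U * dmat n (\<lambda>i. if t \<le> \<mu> i then 1 else 0) * cadjoint U) *\<^sub>v \<phi>))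
     \<ge> 1 - (1 + a) * t - (1 + 1 / a) * (1 - Re (cinner \<phi> (Pi *\<^sub>v \<phi>)))"
proof -
  define g where "g i = (if t \<le> \<mu> i then 1 else (0::real))" for i
  define h where "h i = 1 - g i" for i
  have h01: "\<And>i. h i = 0 \<or> h i = 1" unfolding h_def g_def by auto
  have h0: "\<And>i. 0 \<le> h i" and h1: "\<And>i. h i \<le> 1" using h01 by (metis order.refl zero_le_one)+
  have hmu: "\<And>i. h i = 1 \<Longrightarrow> \<mu> i < t" unfolding h_def g_def by (auto split: if_splits)
  have cU: "cadjoint U \<in> carrier_mat n n" using cadj_carrier[OF U(1)] .
  define y where "y v = cadjoint U *\<^sub>v v" for v
  have yc: "\<And>v. v \<in> carrier_vec n \<Longrightarrow> y v \<in> carrier_vec n" unfolding y_def using cU by simp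
  have nv: "\<And>v. v \<in> carrier_vec n \<Longrightarrow> Re (cinner v v) = (\<Sum>i<n. (cmod (y v $ i))^2)"
    unfolding y_def by (rule norm_coord[OF U(1) U(3)])
  have qg: "\<And>f v. v \<in> carrier_vec n \<Longrightarrow> Re (cinner v ((U * dmat n f * cadjoint U) *\<^sub>v v)) = (\<Sum>i<n. f i * (cmod (y v $ i))^2)"
    unfolding y_def using QF[OF U(1)] by simp
  have s1: "Re (cinner \<phi> ((U * dmat n g * cadjoint U) *\<^sub>v \<phi>)) = 1 - (\<Sum>i<n. h i * (cmod (y \<phi> $ i))^2)"
  proof -
    have "(\<Sum>i<n. h i * (cmod (y \<phi> $ i))^2) = (\<Sum>i<n. (cmod (y \<phi> $ i))^2) - (\<Sum>i<n. g i * (cmod (y \<phi> $ i))^2)"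
      unfolding h_def by (simp add: left_diff_distrib sum_subtractf)
    also have "(\<Sum>i<n. (cmod (y \<phi> $ i))^2) = 1" using nv[OF \<phi>(1)] \<phi>(2) by simp
    finally show ?thesis using qg[OF \<phi>(1), of g] by simp
  qed
  define av where "av = Pi *\<^sub>v \<phi>"
  define bv where "bv = \<phi> - av"
  have av: "av \<in> carrier_vec n" unfolding av_def using Pi \<phi> by simp
  have bv: "bv \<in> carrier_vec n" unfolding bv_def using av \<phi> by simp
  have ysplit: "\<And>i. i < n \<Longrightarrow> y \<phi> $ i = y av $ i + y bv $ i"
  proof -
    fix i assume i: "i < n"
    have "y bv = y \<phi> - y av" unfolding y_def bv_def by (rule mult_minus_distrib_mat_vec[OF cU \<phi>(1) av])
    hence "y bv $ i = y \<phi> $ i - y av $ i" using yc[OF av] i by simp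
    thus "y \<phi> $ i = y av $ i + y bv $ i" by simp
  qed
  have s2: "(\<Sum>i<n. h i * (cmod (y \<phi> $ i))^2) \<le>
      (1 + a) * (\<Sum>i<n. h i * (cmod (y av $ i))^2) + (1 + 1 / a) * (\<Sum>i<n. h i * (cmod (y bv $ i))^2)"
  proof -
    have "(\<Sum>i<n. h i * (cmod (y \<phi> $ i))^2) \<le>
       (\<Sum>i<n. h i * ((1 + a) * (cmod (y av $ i))^2 + (1 + 1 / a) * (cmod (y bv $ i))^2))"
    proof (rule sum_mono)
      fix i assume "i \<in> {..<n}"
      hence i: "i < n" by simp
      show "h i * (cmod (y \<phi> $ i))^2 \<le> h i * ((1 + a) * (cmod (y av $ i))^2 + (1 + 1 / a) * (cmod (y bv $ i))^2)"
        unfolding ysplit[OF i] by (rule mult_left_mono[OF cmod_sq_split[OF a] h0])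
    qed
    also have "\<dots> = (1 + a) * (\<Sum>i<n. h i * (cmod (y av $ i))^2) + (1 + 1 / a) * (\<Sum>i<n. h i * (cmod (y bv $ i))^2)"
      by (simp add: sum.distrib sum_distrib_left algebra_simps)
    finally show ?thesis .
  qed
  have s3: "(\<Sum>i<n. h i * (cmod (y bv $ i))^2) \<le> 1 - Re (cinner \<phi> (Pi *\<^sub>v \<phi>))"
  proof -
    have "(\<Sum>i<n. h i * (cmod (y bv $ i))^2) \<le> (\<Sum>i<n. (cmod (y bv $ i))^2)"
    proof (rule sum_mono)
      fix i
      show "h i * (cmod (y bv $ i))^2 \<le> (cmod (y bv $ i))^2"
        using h01[of i] by auto
    qed
    also have "\<dots> = Re (cinner bv bv)" using nv[OF bv] by simp
    also have "Re (cinner bv bv) = 1 - Re (cinner \<phi> av)"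
    proof -
      have d1: "dim_vec \<phi> = n" "dim_vec av = n" "dim_vec bv = n" using \<phi> av bv by auto
      have "cinner bv bv = cinner \<phi> bv - cinner av bv"
        unfolding bv_def[of] by (rule cinner_minus_left) (use d1 bv_def in auto)
      also have "cinner \<phi> bv = cinner \<phi> \<phi> - cinner \<phi> av"
        unfolding bv_def by (rule cinner_minus_right) (use d1 in auto)
      also have "cinner av bv = cinner av \<phi> - cinner av av"
        unfolding bv_def by (rule cinner_minus_right) (use d1 in auto)
      also have "cinner av av = cinner \<phi> av" unfolding av_def by (rule proj_sq[OF Pi \<phi>(1)])
      also have "cinner av \<phi> = cnj (cinner \<phi> av)" using cinner_cnj[of \<phi> av] d1 by simp
      finally have "cinner bv bv = cinner \<phi> \<phi> - cinner \<phi> av - (cnj (cinner \<phi> av) - cinner \<phi> av)" .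
      thus ?thesis using \<phi>(2) by simp
    qed
    finally show ?thesis unfolding av_def .
  qed
  define Z where "Z = (\<Sum>i<n. h i * (cmod (y av $ i))^2)"
  have s4: "Z \<le> t"
  proof -
    define Q where "Q = U * dmat n h * cadjoint U"
    have Q: "Q \<in> carrier_mat n n" unfolding Q_def using U cU dmat_carrier[of n h] by simp
    define z where "z = Q *\<^sub>v av"
    have z: "z \<in> carrier_vec n" unfolding z_def using Q av by simp
    have yz: "\<And>i. i < n \<Longrightarrow> y z $ i = complex_of_real (h i) * y av $ i"
    proof -
      fix i assume i: "i < n"
      have "y z = cadjoint U *\<^sub>v (U *\<^sub>v (dmat n h *\<^sub>v y av))"
        unfolding y_def z_def Q_def using U(1) cU dmat_carrier[of n h] av
        by (simp add: assoc_mult_mat_vec[of _ n n _ n])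
      also have "\<dots> = (cadjoint U * U) *\<^sub>v (dmat n h *\<^sub>v y av)"
        using U(1) cU dmat_carrier[of n h] yc[OF av] by (simp add: assoc_mult_mat_vec[of _ n n _ n])
      also have "\<dots> = dmat n h *\<^sub>v y av" using U(2) dmat_carrier[of n h] yc[OF av] by simp
      finally show "y z $ i = complex_of_real (h i) * y av $ i" using dmat_mult_vec[OF yc[OF av] i] by simp
    qed
    have cm: "\<And>i. i < n \<Longrightarrow> (cmod (y z $ i))^2 = h i * (cmod (y av $ i))^2"
    proof -
      fix i assume i: "i < n"
      show "(cmod (y z $ i))^2 = h i * (cmod (y av $ i))^2"
        using h01[of i] yz[OF i] by (auto simp: norm_mult)
    qed
    have zz: "Re (cinner z z) = Z" unfolding Z_def using nv[OF z] cm by simp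
    have za: "cinner av z = complex_of_real Z"
      unfolding z_def Q_def Z_def y_def by (rule QF[OF U(1) av])
    have "cinner z av = cnj (cinner av z)" using cinner_cnj[of av z] av z by simp
    hence zaR: "Re (cinner z av) = Z" using za by simp
    have "cinner z av = cinner (cadjoint Pi *\<^sub>v z) \<phi>" unfolding av_def by (rule cinner_mult[OF Pi(1) z \<phi>(1)])
    hence zPi: "Re (cinner (Pi *\<^sub>v z) \<phi>) = Z" using zaR Pi(2) by simp
    have Piz: "Pi *\<^sub>v z \<in> carrier_vec n" using Pi z by simp
    have cs: "2 * Re (cinner (Pi *\<^sub>v z) \<phi>) \<le> c * Re (cinner (Pi *\<^sub>v z) (Pi *\<^sub>v z)) + Re (cinner \<phi> \<phi>) / c"
      by (rule CS_weighted[OF _ c]) (use Piz \<phi> carrier_matD[OF Pi(1)] in simp)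
    have "Re (cinner (Pi *\<^sub>v z) (Pi *\<^sub>v z)) = Re (cinner z (Pi *\<^sub>v z))" using proj_sq[OF Pi z] by simp
    also have "\<dots> \<le> Re (cinner z ((U * dmat n \<mu> * cadjoint U) *\<^sub>v z))" by (rule PiA[OF z])
    also have "\<dots> = (\<Sum>i<n. \<mu> i * (cmod (y z $ i))^2)" by (rule qg[OF z])
    also have "\<dots> \<le> (\<Sum>i<n. t * (h i * (cmod (y av $ i))^2))"
    proof (rule sum_mono)
      fix i assume "i \<in> {..<n}"
      hence i: "i < n" by simp
      show "\<mu> i * (cmod (y z $ i))^2 \<le> t * (h i * (cmod (y av $ i))^2)"
      proof (cases "h i = 1")
        case True
        thus ?thesis unfolding cm[OF i] using hmu[OF True] by (simp add: mult_right_mono)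
      next
        case False
        hence "h i = 0" using h01[of i] by auto
        thus ?thesis unfolding cm[OF i] by simp
      qed
    qed
    also have "\<dots> = t * Z" unfolding Z_def by (simp add: sum_distrib_left)
    finally have pz: "Re (cinner (Pi *\<^sub>v z) (Pi *\<^sub>v z)) \<le> t * Z" .
    have cpz: "c * Re (cinner (Pi *\<^sub>v z) (Pi *\<^sub>v z)) \<le> c * (t * Z)" using pz c by (intro mult_left_mono) auto
    have "2 * Z \<le> c * (t * Z) + 1 / c" using cs zPi \<phi>(2) cpz by simp
    also have "c * (t * Z) = Z" using ct by (simp add: mult.assoc[symmetric])
    also have "1 / c = t" using ct c by (simp add: field_simps)
    finally show "Z \<le> t" by simp
  qed
  have "(\<Sum>i<n. h i * (cmod (y \<phi> $ i))^2) \<le> (1 + a) * t + (1 + 1 / a) * (1 - Re (cinner \<phi> (Pi *\<^sub>v \<phi>)))"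
  proof -
    have "(1 + a) * Z \<le> (1 + a) * t" using s4 a by simp
    moreover have "(1 + 1 / a) * (\<Sum>i<n. h i * (cmod (y bv $ i))^2) \<le> (1 + 1 / a) * (1 - Re (cinner \<phi> (Pi *\<^sub>v \<phi>)))"
      using s3 a by (intro mult_left_mono) auto
    ultimately show ?thesis using s2 unfolding Z_def by linarith
  qed
  thus ?thesis using s1 unfolding g_def by simp
qed


lemma loewner_intro:
  assumes A: "A \<in> carrier_mat n n" "cadjoint A = A" and P: "P \<in> carrier_mat n n" "cadjoint P = P"
    and q: "\<And>v. v \<in> carrier_vec n \<Longrightarrow> Re (cinner v (P *\<^sub>v v)) \<le> c * Re (cinner v (A *\<^sub>v v))"
  shows "loewner_le n P (complex_of_real c \<cdot>\<^sub>m A)"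
proof -
  have cA: "complex_of_real c \<cdot>\<^sub>m A \<in> carrier_mat n n" using A by simp
  have M: "complex_of_real c \<cdot>\<^sub>m A - P \<in> carrier_mat n n" using P by (simp add: minus_carrier_mat)
  have h: "cadjoint (complex_of_real c \<cdot>\<^sub>m A - P) = complex_of_real c \<cdot>\<^sub>m A - P"
    using cadj_minus[OF cA P(1)] cadj_smult_real[of c A] A P by simp
  have "\<forall>v\<in>carrier_vec n. 0 \<le> Re (cinner v ((complex_of_real c \<cdot>\<^sub>m A - P) *\<^sub>v v))"
  proof
    fix v :: "complex vec" assume v: "v \<in> carrier_vec n"
    have "(complex_of_real c \<cdot>\<^sub>m A - P) *\<^sub>v v = (complex_of_real c \<cdot>\<^sub>m A) *\<^sub>v v - P *\<^sub>v v"
      by (rule minus_mult_distrib_mat_vec[OF cA P(1) v])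
    also have "(complex_of_real c \<cdot>\<^sub>m A) *\<^sub>v v = complex_of_real c \<cdot>\<^sub>v (A *\<^sub>v v)"
      by (rule smult_mat_vec[OF A(1) v])
    finally have e: "(complex_of_real c \<cdot>\<^sub>m A - P) *\<^sub>v v = complex_of_real c \<cdot>\<^sub>v (A *\<^sub>v v) - P *\<^sub>v v" .
    have "cinner v ((complex_of_real c \<cdot>\<^sub>m A - P) *\<^sub>v v) = cinner v (complex_of_real c \<cdot>\<^sub>v (A *\<^sub>v v)) - cinner v (P *\<^sub>v v)"
      unfolding e by (rule cinner_minus_right) (use A P v in simp)
    also have "cinner v (complex_of_real c \<cdot>\<^sub>v (A *\<^sub>v v)) = complex_of_real c * cinner v (A *\<^sub>v v)"
      by (rule cinner_smult_right)
    finally show "0 \<le> Re (cinner v ((complex_of_real c \<cdot>\<^sub>m A - P) *\<^sub>v v))" using q[OF v] by simp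
  qed
  thus ?thesis unfolding loewner_le_def psd_def using cA P M h by blast
qed

lemma trace_bound:
  fixes R P Pi :: "complex mat" and K M :: real
  assumes R: "density_op n R" and P: "P \<in> carrier_mat n n" and Pi: "Pi \<in> carrier_mat n n"
    and M: "M \<ge> 0"
    and vb: "\<And>\<phi>. \<phi> \<in> carrier_vec n \<Longrightarrow> cinner \<phi> \<phi> = 1 \<Longrightarrow>
       Re (cinner \<phi> (P *\<^sub>v \<phi>)) \<ge> 1 - K - M * (1 - Re (cinner \<phi> (Pi *\<^sub>v \<phi>)))"
  shows "Re (ctrace (P * R)) \<ge> 1 - K - M * (1 - Re (ctrace (Pi * R)))"
proof -
  have Rc: "R \<in> carrier_mat n n" and hR: "cadjoint R = R" and Rp: "\<And>v. v \<in> carrier_vec n \<Longrightarrow> 0 \<le> Re (cinner v (R *\<^sub>v v))"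
    and tR: "ctrace R = 1" using R unfolding density_op_def psd_def by auto
  obtain V p where V: "V \<in> carrier_mat n n" "cadjoint V * V = 1\<^sub>m n"
    and pk: "\<forall>k<n. p k = Re (cinner (col V k) (R *\<^sub>v col V k))"
    and tr: "\<forall>X :: complex mat. X \<in> carrier_mat n n \<longrightarrow> ctrace (X * R) = (\<Sum>k<n. complex_of_real (p k) * cinner (col V k) (X *\<^sub>v col V k))"
    using trace_avg[OF Rc hR] by blast
  have colc: "\<And>k. col V k \<in> carrier_vec n" using V(1) by (metis carrier_matD(1) col_dim)
  have unit: "\<And>k. k < n \<Longrightarrow> cinner (col V k) (col V k) = 1" using unitary_col_unit[OF V] by blast
  have p0: "\<And>k. k < n \<Longrightarrow> p k \<ge> 0" using pk Rp[OF colc] by simp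
  have reT: "\<And>X. X \<in> carrier_mat n n \<Longrightarrow> Re (ctrace (X * R)) = (\<Sum>k<n. p k * Re (cinner (col V k) (X *\<^sub>v col V k)))"
    using tr by (simp add: Re_sum)
  have sp: "(\<Sum>k<n. p k) = 1"
  proof -
    have "Re (ctrace (1\<^sub>m n * R)) = (\<Sum>k<n. p k * Re (cinner (col V k) (1\<^sub>m n *\<^sub>v col V k)))"
      using reT[of "1\<^sub>m n"] by simp
    also have "\<dots> = (\<Sum>k<n. p k)" using unit colc by simp
    finally show ?thesis using tR Rc by simp
  qed
  have "Re (ctrace (P * R)) = (\<Sum>k<n. p k * Re (cinner (col V k) (P *\<^sub>v col V k)))" using reT[OF P] .
  also have "\<dots> \<ge> (\<Sum>k<n. p k * (1 - K - M * (1 - Re (cinner (col V k) (Pi *\<^sub>v col V k)))))"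
  proof (rule sum_mono)
    fix k assume "k \<in> {..<n}"
    hence k: "k < n" by simp
    show "p k * (1 - K - M * (1 - Re (cinner (col V k) (Pi *\<^sub>v col V k)))) \<le> p k * Re (cinner (col V k) (P *\<^sub>v col V k))"
      using vb[OF colc unit[OF k]] p0[OF k] by (intro mult_left_mono) auto
  qed
  also have "(\<Sum>k<n. p k * (1 - K - M * (1 - Re (cinner (col V k) (Pi *\<^sub>v col V k)))))
      = (1 - K - M) * (\<Sum>k<n. p k) + M * (\<Sum>k<n. p k * Re (cinner (col V k) (Pi *\<^sub>v col V k)))"
    by (simp add: sum_distrib_left sum.distrib algebra_simps sum_subtractf)
  also have "(\<Sum>k<n. p k * Re (cinner (col V k) (Pi *\<^sub>v col V k))) = Re (ctrace (Pi * R))"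
    using reT[OF Pi] by simp
  finally show ?thesis using sp by (simp add: algebra_simps)
qed


theorem lemma3:
  fixes n s :: nat and \<epsilon> \<delta> :: real
    and \<rho> Proj :: "nat \<Rightarrow> complex mat"
  assumes "\<epsilon> > 0" and "\<delta> > 0" and "s \<ge> 1"
    and "\<And>i. i \<in> {1..s} \<Longrightarrow> density_op n (\<rho> i)"
    and "\<And>i. i \<in> {1..s} \<Longrightarrow> projection n (Proj i)"
    and "\<And>i. i \<in> {1..s} \<Longrightarrow> Re (ctrace (Proj i * \<rho> i)) \<ge> 1 - \<epsilon>"
  shows "\<exists>P. projection n P \<and>
    (\<forall>i \<in> {1..s}. Re (ctrace (P * \<rho> i)) \<ge> 1 - \<epsilon> - \<delta> * log 2 (2 * real s)) \<and>
    loewner_le n P ((2 / \<delta>\<^sup>2) powr (log 2 (2 * real s)) \<cdot>\<^sub>m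
       msum n Proj {1..s})"
proof -
  note eps = assms(1) and dlt = assms(2) and s1 = assms(3) and dens = assms(4)
    and prj = assms(5) and trc = assms(6)
  define L where "L = log 2 (2 * real s)"
  define b where "b = 2 / \<delta>\<^sup>2"
  define c where "c = b powr L"
  define A where "A = msum n Proj {1..s}"
  have b0: "b > 0" unfolding b_def using dlt by simp
  have c0: "c > 0" unfolding c_def using b0 by simp
  have Pc: "\<And>i. i \<in> {1..s} \<Longrightarrow> Proj i \<in> carrier_mat n n \<and> cadjoint (Proj i) = Proj i \<and> Proj i * Proj i = Proj i"
    using prj unfolding projection_def by blast
  have Ac: "A \<in> carrier_mat n n" unfolding A_def by (rule msum_carrier)
  have hA: "cadjoint A = A" unfolding A_def using Pc by (intro msum_herm) auto
  have Pnn: "\<And>i v. i \<in> {1..s} \<Longrightarrow> v \<in> carrier_vec n \<Longrightarrow> 0 \<le> Re (cinner v (Proj i *\<^sub>v v))"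
  proof -
    fix i :: nat and v :: "complex vec" assume i: "i \<in> {1..s}" and v: "v \<in> carrier_vec n"
    have "cinner (Proj i *\<^sub>v v) (Proj i *\<^sub>v v) = cinner v (Proj i *\<^sub>v v)"
      using proj_sq[of "Proj i" n v] Pc[OF i] v by blast
    thus "0 \<le> Re (cinner v (Proj i *\<^sub>v v))" using cinner_self_real(2)[of "Proj i *\<^sub>v v"] by simp
  qed
  have qA: "\<And>v. v \<in> carrier_vec n \<Longrightarrow> Re (cinner v (A *\<^sub>v v)) = (\<Sum>k\<in>{1..s}. Re (cinner v (Proj k *\<^sub>v v)))"
    unfolding A_def using msum_quad[of "{1..s}" Proj n] Pc by (simp add: Re_sum)
  have PiA: "\<And>i v. i \<in> {1..s} \<Longrightarrow> v \<in> carrier_vec n \<Longrightarrow> Re (cinner v (Proj i *\<^sub>v v)) \<le> Re (cinner v (A *\<^sub>v v))"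
    unfolding qA by (rule member_le_sum) (auto intro: Pnn)
  have Apsd: "\<And>v. v \<in> carrier_vec n \<Longrightarrow> 0 \<le> Re (cinner v (A *\<^sub>v v))"
    unfolding qA by (rule sum_nonneg) (auto intro: Pnn)
  have L1: "L \<ge> 1"
  proof -
    have "(2::real) powr 1 \<le> 2 * real s" using s1 by simp
    thus ?thesis unfolding L_def using s1 by (subst le_log_iff) auto
  qed
  show ?thesis
  proof (cases "1 - \<epsilon> - \<delta> * L \<le> 0")
    case True
    have "projection n (0\<^sub>m n n)" unfolding projection_def by simp
    moreover have "\<forall>i \<in> {1..s}. Re (ctrace (0\<^sub>m n n * \<rho> i)) \<ge> 1 - \<epsilon> - \<delta> * L"
    proof
      fix i assume i: "i \<in> {1..s}"
      have "\<rho> i \<in> carrier_mat n n" using dens[OF i] unfolding density_op_def psd_def by blast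
      hence "0\<^sub>m n n * \<rho> i = 0\<^sub>m n n" by simp
      hence "ctrace (0\<^sub>m n n * \<rho> i) = 0" by (simp add: ctrace_def)
      thus "Re (ctrace (0\<^sub>m n n * \<rho> i)) \<ge> 1 - \<epsilon> - \<delta> * L" using True by simp
    qed
    moreover have "loewner_le n (0\<^sub>m n n) (complex_of_real c \<cdot>\<^sub>m A)"
    proof (rule loewner_intro[OF Ac hA])
      fix v :: "complex vec" assume v: "v \<in> carrier_vec n"
      have "Re (cinner v (0\<^sub>m n n *\<^sub>v v)) = 0" using v by (simp add: cinner_def)
      thus "Re (cinner v (0\<^sub>m n n *\<^sub>v v)) \<le> c * Re (cinner v (A *\<^sub>v v))" using Apsd[OF v] c0 by simp
    qed auto
    ultimately show ?thesis unfolding L_def c_def b_def A_def by blast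
  next
    case False
    hence small: "\<epsilon> + \<delta> * L < 1" by simp
    show ?thesis
    proof (cases "s = 1")
      case True
      have i1: "1 \<in> {1..s}" using True by simp
      have L: "L = 1" unfolding L_def True by simp
      have d1: "\<delta> < 1" using small L eps by simp
      have "\<delta>\<^sup>2 < 1" using d1 dlt by (simp add: power_less_one_iff)
      hence "b \<ge> 1" unfolding b_def using dlt by (simp add: field_simps)
      hence c1: "c \<ge> 1" unfolding c_def L by simp
      have "projection n (Proj 1)" using prj[OF i1] .
      moreover have "\<forall>i \<in> {1..s}. Re (ctrace (Proj 1 * \<rho> i)) \<ge> 1 - \<epsilon> - \<delta> * L"
        using trc[OF i1] True dlt L by auto
      moreover have "loewner_le n (Proj 1) (complex_of_real c \<cdot>\<^sub>m A)"
      proof (rule loewner_intro[OF Ac hA])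
        fix v :: "complex vec" assume v: "v \<in> carrier_vec n"
        have "Re (cinner v (Proj 1 *\<^sub>v v)) \<le> Re (cinner v (A *\<^sub>v v))" by (rule PiA[OF i1 v])
        also have "\<dots> \<le> c * Re (cinner v (A *\<^sub>v v))" using c1 Apsd[OF v] by (simp add: mult_le_cancel_right1)
        finally show "Re (cinner v (Proj 1 *\<^sub>v v)) \<le> c * Re (cinner v (A *\<^sub>v v))" .
      qed (use Pc[OF i1] in auto)
      ultimately show ?thesis unfolding L_def c_def b_def A_def by blast
    next
      case False
      hence s2: "s \<ge> 2" using s1 by simp
      have L2: "L \<ge> 2"
      proof -
        have "(2::real) powr 2 = 4" using powr_realpow[of 2 2] by simp
        hence "(2::real) powr 2 \<le> 2 * real s" using s2 by simp
        thus ?thesis unfolding L_def using s1 by (subst le_log_iff) auto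
      qed
      have "\<delta> * 2 \<le> \<delta> * L" using L2 dlt by (intro mult_left_mono) auto
      hence dh: "2 * \<delta> < 1" using small eps by linarith
      have e1: "\<epsilon> < 1" using small dlt L1 by (smt (verit) mult_pos_pos)
      have b1: "b \<ge> 1"
      proof -
        have "\<delta>\<^sup>2 < 1" using dh dlt by (simp add: power_less_one_iff)
        thus ?thesis unfolding b_def using dlt by (simp add: field_simps)
      qed
      have cb: "c \<ge> b\<^sup>2"
      proof -
        have "b powr 2 \<le> b powr L" using powr_mono[OF L2 b1] .
        moreover have "b powr 2 = b\<^sup>2" using powr_realpow[of b 2] b0 by simp
        ultimately show ?thesis unfolding c_def by simp
      qed
      define t where "t = 1 / c"
      have ct: "c * t = 1" unfolding t_def using c0 by simp
      have t0: "t > 0" unfolding t_def using c0 by simp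
      have tb: "t \<le> \<delta>^4 / 4"
      proof -
        have "b\<^sup>2 > 0" using b0 by simp
        hence "1 / c \<le> 1 / b\<^sup>2" using cb by (simp add: frac_le)
        also have "1 / b\<^sup>2 = \<delta>^4 / 4"
        proof -
          have d4: "\<delta>^4 = \<delta> * (\<delta> * (\<delta> * \<delta>))" by (simp add: eval_nat_numeral)
          show ?thesis unfolding b_def d4 by (simp add: power_divide power2_eq_square field_simps)
        qed
        finally show ?thesis unfolding t_def .
      qed
      obtain U \<mu> where U: "U \<in> carrier_mat n n" "cadjoint U * U = 1\<^sub>m n" "U * cadjoint U = 1\<^sub>m n"
        and AU: "A = U * dmat n \<mu> * cadjoint U" and \<mu>: "\<forall>i<n. \<mu> i = Re (cinner (col U i) (A *\<^sub>v col U i))"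
        using herm_diag[OF Ac hA] by blast
      have colc: "\<And>k. col U k \<in> carrier_vec n" using U(1) by (metis carrier_matD(1) col_dim)
      have \<mu>0: "\<And>i. i < n \<Longrightarrow> \<mu> i \<ge> 0" using \<mu> Apsd[OF colc] by simp
      have cU: "cadjoint U \<in> carrier_mat n n" using cadj_carrier[OF U(1)] .
      define g where "g i = (if t \<le> \<mu> i then 1 else (0::real))" for i
      define G where "G = dmat n g"
      have Gc: "G \<in> carrier_mat n n" unfolding G_def by (rule dmat_carrier)
      define P where "P = U * G * cadjoint U"
      have Pc': "P \<in> carrier_mat n n" unfolding P_def using U(1) Gc cU by simp
      have hP: "cadjoint P = P"
      proof -
        have "cadjoint P = cadjoint (cadjoint U) * cadjoint (U * G)"
          unfolding P_def using cadj_mult[of "U * G" n n "cadjoint U" n] U(1) Gc cU by simp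
        also have "cadjoint (U * G) = cadjoint G * cadjoint U" by (rule cadj_mult[OF U(1) Gc])
        also have "cadjoint G = G" unfolding G_def by (rule cadj_dmat)
        finally show ?thesis unfolding P_def using U(1) Gc cU by simp
      qed
      have PP: "P * P = P"
      proof -
        have "P * P = U * G * (cadjoint U * U) * G * cadjoint U"
          unfolding P_def using U(1) Gc cU by (simp add: assoc_mult_mat[of _ n n _ n _ n])
        also have "\<dots> = U * (G * G) * cadjoint U" unfolding U(2) using U(1) Gc cU by simp
        also have "G * G = G" unfolding G_def dmat_mult g_def by (rule arg_cong[of _ _ "dmat n"]) auto
        finally show ?thesis unfolding P_def .
      qed
      have "projection n P" unfolding projection_def using Pc' hP PP by blast
      moreover have "\<forall>i \<in> {1..s}. Re (ctrace (P * \<rho> i)) \<ge> 1 - \<epsilon> - \<delta> * L"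
      proof
        fix i assume i: "i \<in> {1..s}"
        note Pi = Pc[OF i]
        have a0: "1 / \<delta> > 0" using dlt by simp
        have vb: "\<And>\<phi>. \<phi> \<in> carrier_vec n \<Longrightarrow> cinner \<phi> \<phi> = 1 \<Longrightarrow>
          Re (cinner \<phi> (P *\<^sub>v \<phi>)) \<ge> 1 - (1 + 1 / \<delta>) * t - (1 + \<delta>) * (1 - Re (cinner \<phi> (Proj i *\<^sub>v \<phi>)))"
        proof -
          fix \<phi> :: "complex vec" assume \<phi>: "\<phi> \<in> carrier_vec n" "cinner \<phi> \<phi> = 1"
          have "Re (cinner \<phi> ((U * dmat n (\<lambda>i. if t \<le> \<mu> i then 1 else 0) * cadjoint U) *\<^sub>v \<phi>))
             \<ge> 1 - (1 + 1 / \<delta>) * t - (1 + 1 / (1 / \<delta>)) * (1 - Re (cinner \<phi> (Proj i *\<^sub>v \<phi>)))"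
            by (rule vec_bound[OF U, of "Proj i" \<mu> c t "1 / \<delta>" \<phi>])
               (use Pi PiA[OF i] AU c0 ct a0 \<phi> in auto)
          thus "Re (cinner \<phi> (P *\<^sub>v \<phi>)) \<ge> 1 - (1 + 1 / \<delta>) * t - (1 + \<delta>) * (1 - Re (cinner \<phi> (Proj i *\<^sub>v \<phi>)))"
            unfolding P_def G_def g_def by simp
        qed
        have tb1: "Re (ctrace (P * \<rho> i)) \<ge> 1 - (1 + 1 / \<delta>) * t - (1 + \<delta>) * (1 - Re (ctrace (Proj i * \<rho> i)))"
          by (rule trace_bound[OF dens[OF i] Pc' _ _ vb]) (use Pi dlt in auto)
        have "(1 + \<delta>) * (1 - Re (ctrace (Proj i * \<rho> i))) \<le> (1 + \<delta>) * \<epsilon>"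
          using trc[OF i] dlt by (intro mult_left_mono) auto
        moreover have "(1 + 1 / \<delta>) * t + \<delta> * \<epsilon> \<le> \<delta> * L"
        proof -
          have "(1 + 1 / \<delta>) * t \<le> (1 + 1 / \<delta>) * (\<delta>^4 / 4)" using tb dlt by (intro mult_left_mono) auto
          also have "\<dots> = (\<delta>^4 + \<delta>^3) / 4"
          proof -
            have d4: "\<delta>^4 = \<delta> * \<delta>^3" by (simp add: eval_nat_numeral)
            show ?thesis unfolding d4 using dlt by (simp add: field_simps)
          qed
          also have "\<dots> \<le> \<delta>" 
          proof -
            have d1: "\<delta> \<le> 1" using dh by simp
            have p3: "\<delta>^3 \<le> 1" using d1 dlt by (simp add: power_le_one)
            have p2: "\<delta>^2 \<le> 1" using d1 dlt by (simp add: power_le_one)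
            have "\<delta>^4 = \<delta> * \<delta>^3" by (simp add: eval_nat_numeral)
            hence "\<delta>^4 \<le> \<delta>" using p3 dlt by (simp add: mult_left_le)
            moreover have "\<delta>^3 = \<delta> * \<delta>^2" by (simp add: eval_nat_numeral)
            hence "\<delta>^3 \<le> \<delta>" using p2 dlt by (simp add: mult_left_le)
            ultimately have "\<delta>^4 + \<delta>^3 \<le> \<delta> + \<delta>" by (rule add_mono)
            thus ?thesis using dlt by (simp add: field_simps)
          qed
          finally have "(1 + 1 / \<delta>) * t \<le> \<delta>" .
          moreover have "\<delta> * \<epsilon> \<le> \<delta>" using e1 dlt by simp
          moreover have "\<delta> * 2 \<le> \<delta> * L" using L2 dlt by (intro mult_left_mono) auto
          ultimately show ?thesis by linarith
        qed
        ultimately show "Re (ctrace (P * \<rho> i)) \<ge> 1 - \<epsilon> - \<delta> * L" using tb1 by (simp add: algebra_simps)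
      qed
      moreover have "loewner_le n P (complex_of_real c \<cdot>\<^sub>m A)"
      proof (rule loewner_intro[OF Ac hA Pc' hP])
        fix v :: "complex vec" assume v: "v \<in> carrier_vec n"
        have qv: "\<And>f. Re (cinner v ((U * dmat n f * cadjoint U) *\<^sub>v v)) = (\<Sum>i<n. f i * (cmod ((cadjoint U *\<^sub>v v) $ i))^2)"
          using QF[OF U(1) v] by simp
        have "Re (cinner v (P *\<^sub>v v)) = (\<Sum>i<n. g i * (cmod ((cadjoint U *\<^sub>v v) $ i))^2)"
          unfolding P_def G_def by (rule qv)
        also have "\<dots> \<le> (\<Sum>i<n. c * (\<mu> i * (cmod ((cadjoint U *\<^sub>v v) $ i))^2))"
        proof (rule sum_mono)
          fix i assume "i \<in> {..<n}"
          hence i: "i < n" by simp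
          have "g i \<le> c * \<mu> i"
          proof (cases "t \<le> \<mu> i")
            case True
            hence "c * t \<le> c * \<mu> i" using c0 by simp
            thus ?thesis using True ct unfolding g_def by simp
          next
            case False
            thus ?thesis unfolding g_def using \<mu>0[OF i] c0 by simp
          qed
          thus "g i * (cmod ((cadjoint U *\<^sub>v v) $ i))^2 \<le> c * (\<mu> i * (cmod ((cadjoint U *\<^sub>v v) $ i))^2)"
            by (simp add: mult.assoc[symmetric] mult_right_mono)
        qed
        also have "\<dots> = c * Re (cinner v (A *\<^sub>v v))" unfolding AU qv by (simp add: sum_distrib_left)
        finally show "Re (cinner v (P *\<^sub>v v)) \<le> c * Re (cinner v (A *\<^sub>v v))" .
      qed
      ultimately show ?thesis unfolding L_def c_def b_def A_def by blast
    qed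
  qed
qed


end
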